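(* Let $n\ge 0$ and let $\Lambda,V\subset\mathbb C$ be domains such that $E^n\colon\Lambda\to V$ is a conformal isomorphism. Suppose there is $\xi>1$ with $\Re z>\xi$ for all $z\in V$, that $|(E^n)'(\kappa)|>2$ for all $\kappa\in\Lambda$, and that $V$ is convex and contained in a horizontal strip of height $\pi/2$. Then $E^{n+1}\colon\Lambda\to E^{n+1}(\Lambda)$ is a conformal isomorphism with \[|(E^{n+1})'(\kappa)|>e^\xi|(E^n)'(\kappa)|-1>2|(E^n)'(\kappa)|\] for all $\kappa\in\Lambda$, and $E^{n,n+1}\colon V\to E^{n+1}(\Lambda)$ is a conformal isomorphism with $|(E^{n,n+1})'(z)|>e^\xi-1$ for all $z\in V$.
   Context: For $\kappa\in\mathbb C$ let $E_\kappa(z)=e^z+\kappa$ and $E^n(\kappa):=E_\kappa^{\circ n}(\kappa)$, an entire function of $\kappa$; $(E^n)'$ denotes its derivative with respect to $\kappa$. If $E^n\colon\Lambda\to V$ is a conformal isomorphism, then for $k\ge0$ one defines the holomorphic map $E^{n,n+k}:=E^{n+k}\circ(E^n)^{-1}\colon V\to\mathbb C$; in particular $E^{n,n+1}(z)=e^z+\kappa$ where $\kappa=(E^n)^{-1}(z)$. *)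

theory Defs
  imports "HOL-Analysis.Analysis"
begin

definition Ek :: "complex \<Rightarrow> complex \<Rightarrow> complex" where
  "Ek \<kappa> z = exp z + \<kappa>"

definition En :: "nat \<Rightarrow> complex \<Rightarrow> complex" where
  "En n \<kappa> = (Ek \<kappa> ^^ n) \<kappa>"

definition conformal_iso :: "(complex \<Rightarrow> complex) \<Rightarrow> complex set \<Rightarrow> complex set \<Rightarrow> bool" where
  "conformal_iso f A B \<longleftrightarrow> f holomorphic_on A \<and> inj_on f A \<and> f ` A = B"

definition domain :: "complex set \<Rightarrow> bool" where
  "domain S \<longleftrightarrow> open S \<and> connected S \<and> S \<noteq> {}"

definition Enk :: "complex set \<Rightarrow> nat \<Rightarrow> nat \<Rightarrow> complex \<Rightarrow> complex" where
  "Enk \<Lambda> n k z = En (n + k) (inv_into \<Lambda> (En n) z)"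

end

theory Submission
  imports Defs
begin

lemma En_Suc: "En (Suc n) k = exp (En n k) + k"
  by (simp add: En_def Ek_def)

lemma En_Suc_fun: "En (Suc n) = (\<lambda>k. exp (En n k) + k)"
  by (rule ext) (rule En_Suc)

lemma En_holo: "En n holomorphic_on UNIV"
proof (induction n)
  case 0
  have "En 0 = (\<lambda>k. k)" by (rule ext) (simp add: En_def)
  then show ?case by simp
next
  case (Suc n)
  show ?case unfolding En_Suc_fun
    by (intro holomorphic_intros holomorphic_on_compose[unfolded o_def, OF Suc, of exp]) 
qed

lemma En_der: "(En n has_field_derivative deriv (En n) k) (at k)"
  using holomorphic_derivI[OF En_holo open_UNIV UNIV_I] .

lemma cos_gt_half: assumes "\<bar>t\<bar> < pi/4" shows "cos t > 1/2"
proof -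
  have "cos \<bar>t\<bar> > cos (pi/3)"
    by (rule cos_monotone_0_pi) (use assms pi_gt_zero in auto)
  then show ?thesis by (simp add: cos_60 cos_abs_real)
qed

theorem lemma2p1:
  fixes n :: nat and \<Lambda> V :: "complex set" and \<xi> :: real
  assumes "domain \<Lambda>" and "domain V"
    and "conformal_iso (En n) \<Lambda> V"
    and "\<xi> > 1" and "\<forall>z\<in>V. Re z > \<xi>"
    and "\<forall>\<kappa>\<in>\<Lambda>. norm (deriv (En n) \<kappa>) > 2"
    and "convex V"
    and "\<exists>a::real. \<forall>z\<in>V. a < Im z \<and> Im z < a + pi / 2"
  shows "conformal_iso (En (Suc n)) \<Lambda> (En (Suc n) ` \<Lambda>)
    \<and> (\<forall>\<kappa>\<in>\<Lambda>. norm (deriv (En (Suc n)) \<kappa>) > exp \<xi> * norm (deriv (En n) \<kappa>) - 1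
                \<and> exp \<xi> * norm (deriv (En n) \<kappa>) - 1 > 2 * norm (deriv (En n) \<kappa>))
    \<and> conformal_iso (Enk \<Lambda> n 1) V (En (Suc n) ` \<Lambda>)
    \<and> (\<forall>z\<in>V. norm (deriv (Enk \<Lambda> n 1) z) > exp \<xi> - 1)"
proof -
  obtain a :: real where a: "\<forall>z\<in>V. a < Im z \<and> Im z < a + pi / 2" using assms(8) by blast
  have oL: "open \<Lambda>" and oV: "open V" using assms(1,2) by (auto simp: domain_def)
  have injE: "inj_on (En n) \<Lambda>" and imE: "En n ` \<Lambda> = V"
    using assms(3) by (auto simp: conformal_iso_def)
  define D where "D = deriv (En n)"
  have Dpos: "\<forall>k\<in>\<Lambda>. norm (D k) > 2" using assms(6) by (simp add: D_def)
  define \<phi> where "\<phi> = inv_into \<Lambda> (En n)"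
  have \<phi>L: "\<And>x. x \<in> \<Lambda> \<Longrightarrow> \<phi> (En n x) = x" using injE by (simp add: \<phi>_def)
  have \<phi>V: "\<And>z. z \<in> V \<Longrightarrow> \<phi> z \<in> \<Lambda> \<and> En n (\<phi> z) = z"
    using imE by (auto simp: \<phi>_def inv_into_into f_inv_into_f)
  have \<phi>der: "(\<phi> has_field_derivative inverse (D (\<phi> z))) (at z)" if z: "z \<in> V" for z
  proof -
    let ?k = "\<phi> z"
    have k: "?k \<in> \<Lambda>" and ek: "En n ?k = z" using \<phi>V[OF z] by auto
    have Dnz: "D ?k \<noteq> 0" using Dpos k by force
    have "(\<phi> has_derivative (*) (inverse (D ?k))) (at (En n ?k))"
    proof (rule has_derivative_inverse_strong[OF oL k])
      show "continuous_on \<Lambda> (En n)"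
        using En_holo holomorphic_on_imp_continuous_on holomorphic_on_subset by blast
      show "\<And>x. x \<in> \<Lambda> \<Longrightarrow> \<phi> (En n x) = x" by (rule \<phi>L)
      show "(En n has_derivative (*) (D ?k)) (at ?k)"
        using En_der[of n ?k] by (simp add: has_field_derivative_def D_def)
      show "(*) (D ?k) \<circ> (*) (inverse (D ?k)) = id"
        using Dnz by (auto simp: fun_eq_iff)
    qed
    then show ?thesis using ek by (simp add: has_field_derivative_def mult.commute)
  qed
  define \<psi> where "\<psi> z = exp z + \<phi> z" for z
  define \<psi>' where "\<psi>' z = exp z + inverse (D (\<phi> z))" for z
  have \<psi>der: "(\<psi> has_field_derivative \<psi>' z) (at z)" if "z \<in> V" for z
    unfolding \<psi>_def[abs_def] \<psi>'_def
    by (rule DERIV_add[OF DERIV_exp \<phi>der[OF that]])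
  have invsmall: "norm (inverse (D (\<phi> z))) < 1/2" if "z \<in> V" for z
  proof -
    have "norm (D (\<phi> z)) > 2" using Dpos \<phi>V[OF that] by blast
    then have "inverse (norm (D (\<phi> z))) < inverse 2"
      by (intro less_imp_inverse_less) auto
    then show ?thesis by (simp add: norm_inverse)
  qed
  define \<omega> where "\<omega> = exp (- (\<i> * of_real (a + pi/4)))"
  have normw: "norm \<omega> = 1" by (simp add: \<omega>_def norm_exp)
  have Repos: "Re (\<omega> * \<psi>' u) > 0" if u: "u \<in> V" for u
  proof -
    have "\<omega> * exp u = exp (u - \<i> * of_real (a + pi/4))"
      by (simp add: \<omega>_def exp_add[symmetric])
    then have "Re (\<omega> * exp u) = exp (Re u) * cos (Im u - (a + pi/4))"
      by (simp add: Re_exp)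
    moreover have "cos (Im u - (a + pi/4)) > 1/2"
    proof (rule cos_gt_half)
      have "a < Im u" "Im u < a + pi/2" using a u by auto
      then show "\<bar>Im u - (a + pi/4)\<bar> < pi/4" unfolding abs_less_iff by linarith
    qed
    moreover have "exp (Re u) > 1" using assms(4,5) u by auto
    ultimately have r1: "Re (\<omega> * exp u) > 1 * (1/2)"
      by (metis mult_strict_mono exp_gt_zero less_eq_real_def zero_less_divide_1_iff zero_less_numeral)
    have "\<bar>Re (\<omega> * inverse (D (\<phi> u)))\<bar> \<le> norm (\<omega> * inverse (D (\<phi> u)))"
      by (rule abs_Re_le_cmod)
    also have "\<dots> < 1/2" using invsmall[OF u] by (simp add: norm_mult normw)
    finally have r2: "\<bar>Re (\<omega> * inverse (D (\<phi> u)))\<bar> < 1/2" .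
    have "Re (\<omega> * \<psi>' u) = Re (\<omega> * exp u) + Re (\<omega> * inverse (D (\<phi> u)))"
      by (simp only: \<psi>'_def distrib_left plus_complex.sel)
    then show ?thesis using r1 r2 by linarith
  qed
  have inj\<psi>: "inj_on \<psi> V"
  proof (rule inj_onI, rule ccontr)
    fix z w assume z: "z \<in> V" and w: "w \<in> V" and eq: "\<psi> z = \<psi> w" and ne: "z \<noteq> w"
    define f where "f u = \<omega> * \<psi> u / (z - w)" for u
    have seg: "closed_segment w z \<subseteq> V" using assms(7) z w by (simp add: closed_segment_subset)
    have "\<exists>u. u \<in> closed_segment w z \<and> Re (f z) - Re (f w) = Re ((\<omega> * \<psi>' u / (z - w)) * (z - w))"
      by (rule complex_mvt_line) (unfold f_def, use seg \<psi>der ne in \<open>auto intro!: derivative_eq_intros\<close>)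
    then obtain u where u: "u \<in> V" and "Re (f z) - Re (f w) = Re (\<omega> * \<psi>' u)"
      using seg ne by auto
    moreover have "f z = f w" using eq by (simp add: f_def)
    ultimately show False using Repos[OF u] by simp
  qed
  have ES: "En (Suc n) k = \<psi> (En n k)" if "k \<in> \<Lambda>" for k
    using \<phi>L[OF that] by (simp add: En_Suc \<psi>_def)
  have injES: "inj_on (En (Suc n)) \<Lambda>"
  proof -
    have "inj_on (\<psi> \<circ> En n) \<Lambda>"
      using comp_inj_on[OF injE] inj\<psi> imE by simp
    then show ?thesis by (rule inj_on_cong[THEN iffD1, rotated]) (simp add: ES)
  qed
  have holES: "En (Suc n) holomorphic_on \<Lambda>"
    using En_holo holomorphic_on_subset by blast
  have C1: "conformal_iso (En (Suc n)) \<Lambda> (En (Suc n) ` \<Lambda>)"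
    using injES holES by (simp add: conformal_iso_def)
  have C2: "\<forall>\<kappa>\<in>\<Lambda>. norm (deriv (En (Suc n)) \<kappa>) > exp \<xi> * norm (deriv (En n) \<kappa>) - 1
                \<and> exp \<xi> * norm (deriv (En n) \<kappa>) - 1 > 2 * norm (deriv (En n) \<kappa>)"
  proof
    fix k assume k: "k \<in> \<Lambda>"
    have "(En (Suc n) has_field_derivative exp (En n k) * D k + 1) (at k)"
      unfolding En_Suc_fun D_def
      by (rule DERIV_add[OF DERIV_chain2[OF DERIV_exp En_der] DERIV_ident])
    then have dE: "deriv (En (Suc n)) k = exp (En n k) * D k + 1"
      by (rule DERIV_imp_deriv)
    have Dk: "norm (D k) > 2" using Dpos k by blast
    have Re: "Re (En n k) > \<xi>" using assms(5) imE k by blast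
    then have ex: "exp (Re (En n k)) > exp \<xi>" by simp
    have "norm (exp (En n k) * D k + 1) \<ge> norm (exp (En n k) * D k) - norm (1::complex)"
      by (rule norm_diff_ineq)
    also have "norm (exp (En n k) * D k) = exp (Re (En n k)) * norm (D k)"
      by (simp add: norm_mult norm_exp)
    finally have g1: "norm (exp (En n k) * D k + 1) \<ge> exp (Re (En n k)) * norm (D k) - 1" by simp
    have "exp (Re (En n k)) * norm (D k) > exp \<xi> * norm (D k)"
      using ex Dk by (intro mult_strict_right_mono) auto
    with g1 have part1: "norm (deriv (En (Suc n)) k) > exp \<xi> * norm (D k) - 1"
      unfolding dE by linarith
    have "1 + \<xi> + \<xi>^2/2 \<le> exp \<xi>" using assms(4) by (intro exp_lower_Taylor_quadratic) auto
    moreover have "\<xi>^2 > 1" using assms(4) by (simp add: one_less_power)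
    ultimately have e: "exp \<xi> - 2 > 1/2" using assms(4) by linarith
    have "(exp \<xi> - 2) * norm (D k) > (1/2) * 2"
      using e Dk by (intro mult_strict_mono) auto
    then have "exp \<xi> * norm (D k) - 1 > 2 * norm (D k)" by (simp add: algebra_simps)
    then show "norm (deriv (En (Suc n)) k) > exp \<xi> * norm (deriv (En n) k) - 1
                \<and> exp \<xi> * norm (deriv (En n) k) - 1 > 2 * norm (deriv (En n) k)"
      using part1 by (simp add: D_def)
  qed
  have Enk\<psi>: "Enk \<Lambda> n 1 z = \<psi> z" if "z \<in> V" for z
    using \<phi>V[OF that] by (simp add: Enk_def \<phi>_def[symmetric] En_Suc \<psi>_def)
  have hol\<psi>: "\<psi> holomorphic_on V"
    using \<psi>der oV by (auto simp: holomorphic_on_open)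
  have holK: "Enk \<Lambda> n 1 holomorphic_on V"
    using hol\<psi> by (rule holomorphic_transform) (metis Enk\<psi>)
  have injK: "inj_on (Enk \<Lambda> n 1) V"
    using inj\<psi> by (rule inj_on_cong[THEN iffD2, rotated]) (metis Enk\<psi>)
  have imK: "Enk \<Lambda> n 1 ` V = En (Suc n) ` \<Lambda>"
  proof -
    have "Enk \<Lambda> n 1 ` V = \<psi> ` V" by (rule image_cong[OF refl]) (metis Enk\<psi>)
    also have "\<dots> = \<psi> ` En n ` \<Lambda>" using imE by simp
    also have "\<dots> = En (Suc n) ` \<Lambda>" by (auto simp: ES image_iff)
    finally show ?thesis .
  qed
  have C3: "conformal_iso (Enk \<Lambda> n 1) V (En (Suc n) ` \<Lambda>)"
    using holK injK imK by (simp add: conformal_iso_def)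
  have C4: "\<forall>z\<in>V. norm (deriv (Enk \<Lambda> n 1) z) > exp \<xi> - 1"
  proof
    fix z assume z: "z \<in> V"
    have "(Enk \<Lambda> n 1 has_field_derivative \<psi>' z) (at z)"
      by (rule has_field_derivative_transform_within_open[OF \<psi>der[OF z] oV z]) (metis Enk\<psi>)
    then have dK: "deriv (Enk \<Lambda> n 1) z = \<psi>' z" by (rule DERIV_imp_deriv)
    have "norm (\<psi>' z) \<ge> norm (exp z) - norm (inverse (D (\<phi> z)))"
      unfolding \<psi>'_def by (rule norm_diff_ineq)
    moreover have "norm (exp z) > exp \<xi>" using assms(5) z by (simp add: norm_exp)
    ultimately show "norm (deriv (Enk \<Lambda> n 1) z) > exp \<xi> - 1"
      using invsmall[OF z] unfolding dK by linarith
  qed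
  show ?thesis using C1 C2 C3 C4 by blast
qed

end
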